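(* Let $\alpha\in(0,1)$, $p=1$, and $\frac1q=1-\frac\alpha n$. Then for every $f$ with $\|f\|_{W^{\alpha,1}}<\infty$, \[ \|f\|_{GaRo_q}\le n^{(n+\alpha)/2}\|f\|_{W^{\alpha,1}}. \]
   Context: $Q_0=(0,1)^n$; cubes are subcubes of $Q_0$ with sides parallel to the axes. $P$ is the set of countable families $\{Q_i\}_{i\in I}$ of subcubes of $Q_0$ with pairwise disjoint interiors. $\|f\|_{W^{\alpha,1}}=\int_{Q_0}\int_{Q_0}\frac{|f(x)-f(y)|}{|x-y|^{n+\alpha}}\,dx\,dy$. For $1<q<\infty$, $1/q+1/q'=1$, \[ \|f\|_{GaRo_q}=\sup_{\{Q_i\}\in P}\frac{\sum_{i}\frac1{|Q_i|}\int_{Q_i}\int_{Q_i}|f(x)-f(y)|\,dx\,dy}{(\sum_i|Q_i|)^{1/q'}}. \] *)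

theory Defs
  imports "HOL-Analysis.Analysis"
begin

definition Q0 :: "(real^'n) set" where
  "Q0 = box 0 One"

text \<open>Subcubes of Q0 with sides parallel to the axes (open cubes; boundaries are null sets).\<close>
definition is_subcube :: "(real^'n) set \<Rightarrow> bool" where
  "is_subcube Q \<longleftrightarrow> (\<exists>a h. h > 0 \<and> Q = box a (a + h *\<^sub>R One) \<and> Q \<subseteq> Q0)"

definition cube_families :: "(real^'n) set set set" where
  "cube_families = {C. countable C \<and> (\<forall>Q\<in>C. is_subcube Q) \<and>
      (\<forall>Q\<in>C. \<forall>Q'\<in>C. Q \<noteq> Q' \<longrightarrow> interior Q \<inter> interior Q' = {})}"

definition W_seminorm :: "real \<Rightarrow> (real^'n \<Rightarrow> real) \<Rightarrow> ennreal" where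
  "W_seminorm \<alpha> f = (\<integral>\<^sup>+ x \<in> Q0. (\<integral>\<^sup>+ y \<in> Q0.
       ennreal (\<bar>f x - f y\<bar> / norm (x - y) powr (real CARD('n) + \<alpha>)) \<partial>lebesgue) \<partial>lebesgue)"

definition GaRo_num :: "(real^'n \<Rightarrow> real) \<Rightarrow> (real^'n) set set \<Rightarrow> ennreal" where
  "GaRo_num f C = (\<integral>\<^sup>+ Q. (\<integral>\<^sup>+ x \<in> Q. (\<integral>\<^sup>+ y \<in> Q. ennreal \<bar>f x - f y\<bar> \<partial>lebesgue) \<partial>lebesgue)
                        / emeasure lebesgue Q \<partial>count_space C)"

text \<open>Total measure sum_i |Q_i| (finite, at most 1, for families in P).\<close>
definition family_measure :: "(real^'n) set set \<Rightarrow> real" where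
  "family_measure C = enn2real (\<integral>\<^sup>+ Q. emeasure lebesgue Q \<partial>count_space C)"

definition GaRo_norm :: "real \<Rightarrow> (real^'n \<Rightarrow> real) \<Rightarrow> ennreal" where
  "GaRo_norm q f = (SUP C \<in> cube_families.
       GaRo_num f C / ennreal (family_measure C powr (1 - 1 / q)))"

end

theory Submission
  imports Defs
begin


lemma sigma_finite_lebesgue: "sigma_finite_measure (lebesgue :: ('a::euclidean_space) measure)"
proof -
  interpret lborel: sigma_finite_measure "lborel :: 'a measure" by (rule sigma_finite_lborel)
  obtain A :: "'a set set" where A: "countable A" "A \<subseteq> sets lborel" "\<Union>A = space lborel" "\<forall>a\<in>A. emeasure lborel a \<noteq> \<infinity>"
    using lborel.sigma_finite_countable by blast
  show ?thesis
    apply (unfold_locales)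
    apply (rule exI[of _ A])
    using A by auto
qed

lemma box_facts:
  fixes a :: "real^'n" and h :: real
  assumes "h > 0"
  shows "emeasure lebesgue (box a (a + h *\<^sub>R One)) = ennreal (h ^ CARD('n))"
  using assms by (simp add: emeasure_lborel_box_eq inner_simps prod_constant)

lemma box_diam:
  fixes a x y :: "real^'n" and h :: real
  assumes "x \<in> box a (a + h *\<^sub>R One)" "y \<in> box a (a + h *\<^sub>R One)"
  shows "norm (x - y) \<le> sqrt (real CARD('n)) * h"
proof -
  have "infnorm (x - y) \<le> h"
    unfolding infnorm_def
  proof (rule cSup_least)
    show "{\<bar>(x-y) \<bullet> b\<bar> |b. b \<in> Basis} \<noteq> {}" using nonempty_Basis by blast
  next
    fix z assume "z \<in> {\<bar>(x-y) \<bullet> b\<bar> |b. b \<in> Basis}"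
    then obtain b where b: "b \<in> Basis" "z = \<bar>(x-y) \<bullet> b\<bar>" by blast
    have "a \<bullet> b < x \<bullet> b" "x \<bullet> b < (a + h *\<^sub>R One) \<bullet> b" "a \<bullet> b < y \<bullet> b" "y \<bullet> b < (a + h *\<^sub>R One) \<bullet> b"
      using assms b(1) by (auto simp: mem_box)
    then show "z \<le> h" using b by (auto simp: inner_simps)
  qed
  then show ?thesis using norm_le_infnorm[of "x - y"]
    by (smt (verit) DIM_cart DIM_real mult_left_mono real_sqrt_ge_zero mult_1_right of_nat_0_le_iff)
qed



lemma id_lebesgue_meas: "(\<lambda>x::'a::euclidean_space. x) \<in> borel_measurable lebesgue"
  by (rule measurable_completion) simp

lemma meas_pair:
  fixes g :: "real^'n \<Rightarrow> real" and s :: real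
  assumes g[measurable]: "g \<in> borel_measurable lebesgue" and A[measurable]: "A \<in> sets lebesgue"
  shows "(\<lambda>(x,y). ennreal (\<bar>g x - g y\<bar> / norm (x - y) powr s) * indicator A y) \<in> borel_measurable (lebesgue \<Otimes>\<^sub>M lebesgue)"
proof -
  have [measurable]: "(\<lambda>p. fst p - snd p) \<in> borel_measurable (lebesgue \<Otimes>\<^sub>M (lebesgue :: (real^'n) measure))"
    using id_lebesgue_meas[where 'a="real^'n"] by measurable
  show ?thesis by measurable
qed

lemma meas_G:
  fixes g :: "real^'n \<Rightarrow> real" and s :: real
  assumes g: "g \<in> borel_measurable lebesgue" and A: "A \<in> sets lebesgue"
  shows "(\<lambda>x. \<integral>\<^sup>+ y. ennreal (\<bar>g x - g y\<bar> / norm (x - y) powr s) * indicator A y \<partial>lebesgue) \<in> borel_measurable lebesgue"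
proof -
  interpret sigma_finite_measure "lebesgue :: (real^'n) measure" by (rule sigma_finite_lebesgue)
  show ?thesis
    by (rule borel_measurable_nn_integral) (use meas_pair[OF g A, of s] in simp)
qed

lemma meas_y:
  fixes g :: "real^'n \<Rightarrow> real" and s :: real
  assumes g[measurable]: "g \<in> borel_measurable lebesgue" and A[measurable]: "A \<in> sets lebesgue"
  shows "(\<lambda>y. ennreal (\<bar>g x - g y\<bar> / norm (x - y) powr s) * indicator A y) \<in> borel_measurable lebesgue"
proof -
  have [measurable]: "(\<lambda>y. x - y) \<in> borel_measurable (lebesgue :: (real^'n) measure)"
    using id_lebesgue_meas[where 'a="real^'n"] by measurable
  show ?thesis by measurable
qed



lemma pt_bound:
  fixes x y :: "real^'n" and d r D s :: real
  assumes "r = norm (x - y)" "r \<le> D" "0 \<le> s" "x = y \<Longrightarrow> d = 0"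
  shows "\<bar>d\<bar> \<le> D powr s * (\<bar>d\<bar> / r powr s)"
proof (cases "x = y")
  case True then show ?thesis using assms by simp
next
  case False
  then have rp: "r > 0" using assms(1) by simp
  have "r powr s \<le> D powr s" using powr_mono2[OF assms(3) _ assms(2)] rp by simp
  moreover have "r powr s > 0" using rp by simp
  ultimately show ?thesis
    by (simp add: divide_simps mult_left_mono mult.commute)
qed

lemma cube_bound:
  fixes g :: "real^'n \<Rightarrow> real" and s h :: real and a :: "real^'n"
  assumes g: "g \<in> borel_measurable lebesgue" and h: "h > 0" and s: "0 \<le> s"
  defines "Q \<equiv> box a (a + h *\<^sub>R One)"
  shows "(\<integral>\<^sup>+x. (\<integral>\<^sup>+y. ennreal \<bar>g x - g y\<bar> * indicator Q y \<partial>lebesgue) * indicator Q x \<partial>lebesgue)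
     \<le> ennreal ((sqrt (real CARD('n)) * h) powr s) *
       (\<integral>\<^sup>+x. (\<integral>\<^sup>+y. ennreal (\<bar>g x - g y\<bar> / norm (x - y) powr s) * indicator Q y \<partial>lebesgue) * indicator Q x \<partial>lebesgue)"
proof -
  define B where "B = (sqrt (real CARD('n)) * h) powr s"
  have QS: "Q \<in> sets lebesgue" unfolding Q_def by simp
  have "(\<integral>\<^sup>+x. (\<integral>\<^sup>+y. ennreal \<bar>g x - g y\<bar> * indicator Q y \<partial>lebesgue) * indicator Q x \<partial>lebesgue)
     \<le> (\<integral>\<^sup>+x. (\<integral>\<^sup>+y. ennreal B * (ennreal (\<bar>g x - g y\<bar> / norm (x - y) powr s) * indicator Q y) \<partial>lebesgue) * indicator Q x \<partial>lebesgue)"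
  proof (rule nn_integral_mono)
    fix x
    show "(\<integral>\<^sup>+y. ennreal \<bar>g x - g y\<bar> * indicator Q y \<partial>lebesgue) * indicator Q x
       \<le> (\<integral>\<^sup>+y. ennreal B * (ennreal (\<bar>g x - g y\<bar> / norm (x - y) powr s) * indicator Q y) \<partial>lebesgue) * indicator Q x"
    proof (cases "x \<in> Q")
      case xQ: True
      have "(\<integral>\<^sup>+y. ennreal \<bar>g x - g y\<bar> * indicator Q y \<partial>lebesgue)
         \<le> (\<integral>\<^sup>+y. ennreal B * (ennreal (\<bar>g x - g y\<bar> / norm (x - y) powr s) * indicator Q y) \<partial>lebesgue)"
      proof (rule nn_integral_mono)
        fix y
        show "ennreal \<bar>g x - g y\<bar> * indicator Q y \<le> ennreal B * (ennreal (\<bar>g x - g y\<bar> / norm (x - y) powr s) * indicator Q y)"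
        proof (cases "y \<in> Q")
          case True
          have "norm (x - y) \<le> sqrt (real CARD('n)) * h"
            using box_diam xQ True unfolding Q_def by blast
          then have "\<bar>g x - g y\<bar> \<le> B * (\<bar>g x - g y\<bar> / norm (x - y) powr s)"
            unfolding B_def by (intro pt_bound[OF refl _ s]) auto
          then have "ennreal \<bar>g x - g y\<bar> \<le> ennreal (B * (\<bar>g x - g y\<bar> / norm (x - y) powr s))"
            by (rule ennreal_leI)
          also have "\<dots> = ennreal B * ennreal (\<bar>g x - g y\<bar> / norm (x - y) powr s)"
            by (rule ennreal_mult) (auto simp: B_def)
          finally show ?thesis using True by simp
        qed simp
      qed
      then show ?thesis using xQ by simp
    qed simp
  qed
  also have "\<dots> = (\<integral>\<^sup>+x. ennreal B * ((\<integral>\<^sup>+y. ennreal (\<bar>g x - g y\<bar> / norm (x - y) powr s) * indicator Q y \<partial>lebesgue) * indicator Q x) \<partial>lebesgue)"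
    by (subst nn_integral_cmult[OF meas_y[OF g QS]]) (simp add: mult.assoc)
  also have "\<dots> = ennreal B * (\<integral>\<^sup>+x. (\<integral>\<^sup>+y. ennreal (\<bar>g x - g y\<bar> / norm (x - y) powr s) * indicator Q y \<partial>lebesgue) * indicator Q x \<partial>lebesgue)"
    by (rule nn_integral_cmult) (intro borel_measurable_times_ennreal meas_G[OF g QS] borel_measurable_indicator QS)
  finally show ?thesis unfolding B_def .
qed



lemma indicator_count_sum:
  assumes disj: "\<And>Q Q'. Q \<in> C \<Longrightarrow> Q' \<in> C \<Longrightarrow> Q \<noteq> Q' \<Longrightarrow> Q \<inter> Q' = {}"
  shows "(\<integral>\<^sup>+ Q. indicator Q x \<partial>count_space C) = (indicator (\<Union>C) x :: ennreal)"
proof cases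
  assume x: "x \<in> \<Union>C"
  then obtain j where j: "x \<in> j" "j \<in> C" by auto
  with disj have "\<And>i. i \<in> C \<Longrightarrow> indicator i x = (indicator {j} i::ennreal)"
    by (auto split: split_indicator)
  with x j show ?thesis
    by (simp cong: nn_integral_cong_simp)
qed (auto simp: nn_integral_0_iff_AE)

lemma sum_bound:
  fixes g :: "real^'n \<Rightarrow> real" and s :: real and C :: "(real^'n) set set"
  assumes g: "g \<in> borel_measurable lebesgue" and A: "A \<in> sets lebesgue"
    and C: "countable C" and CA: "\<And>Q. Q \<in> C \<Longrightarrow> Q \<subseteq> A" and CS: "\<And>Q. Q \<in> C \<Longrightarrow> Q \<in> sets lebesgue"
    and disj: "\<And>Q Q'. Q \<in> C \<Longrightarrow> Q' \<in> C \<Longrightarrow> Q \<noteq> Q' \<Longrightarrow> Q \<inter> Q' = {}"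
  shows "(\<integral>\<^sup>+Q. (\<integral>\<^sup>+x. (\<integral>\<^sup>+y. ennreal (\<bar>g x - g y\<bar> / norm (x - y) powr s) * indicator Q y \<partial>lebesgue) * indicator Q x \<partial>lebesgue) \<partial>count_space C)
     \<le> (\<integral>\<^sup>+x. (\<integral>\<^sup>+y. ennreal (\<bar>g x - g y\<bar> / norm (x - y) powr s) * indicator A y \<partial>lebesgue) * indicator A x \<partial>lebesgue)"
proof -
  define G where "G x = (\<integral>\<^sup>+y. ennreal (\<bar>g x - g y\<bar> / norm (x - y) powr s) * indicator A y \<partial>lebesgue)" for x
  have Gm: "G \<in> borel_measurable lebesgue" unfolding G_def by (rule meas_G[OF g A])
  have "(\<integral>\<^sup>+Q. (\<integral>\<^sup>+x. (\<integral>\<^sup>+y. ennreal (\<bar>g x - g y\<bar> / norm (x - y) powr s) * indicator Q y \<partial>lebesgue) * indicator Q x \<partial>lebesgue) \<partial>count_space C)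
     \<le> (\<integral>\<^sup>+Q. (\<integral>\<^sup>+x. G x * indicator Q x \<partial>lebesgue) \<partial>count_space C)"
  proof (intro nn_integral_mono mult_right_mono)
    fix Q x assume "Q \<in> space (count_space C)"
    then have "Q \<subseteq> A" using CA by simp
    then show "(\<integral>\<^sup>+y. ennreal (\<bar>g x - g y\<bar> / norm (x - y) powr s) * indicator Q y \<partial>lebesgue) \<le> G x"
      unfolding G_def by (intro nn_integral_mono mult_left_mono) (auto split: split_indicator)
  qed simp
  also have "\<dots> = (\<integral>\<^sup>+x. (\<integral>\<^sup>+Q. G x * indicator Q x \<partial>count_space C) \<partial>lebesgue)"
    by (rule nn_integral_count_space_nn_integral[symmetric]) (use C CS Gm in auto)
  also have "\<dots> = (\<integral>\<^sup>+x. G x * indicator (\<Union>C) x \<partial>lebesgue)"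
    by (subst nn_integral_cmult) (simp_all add: indicator_count_sum[OF disj])
  also have "\<dots> \<le> (\<integral>\<^sup>+x. G x * indicator A x \<partial>lebesgue)"
    using CA by (intro nn_integral_mono mult_left_mono) (auto split: split_indicator)
  finally show ?thesis unfolding G_def .
qed



lemma real_alg:
  fixes h \<alpha> :: real and n :: nat
  assumes h: "h > 0" and n: "n > 0"
  shows "(sqrt (real n) * h) powr (real n + \<alpha>) / h ^ n = real n powr ((real n + \<alpha>) / 2) * h powr \<alpha>"
proof -
  have "(sqrt (real n) * h) powr (real n + \<alpha>) = sqrt (real n) powr (real n + \<alpha>) * h powr (real n + \<alpha>)"
    by (simp add: powr_mult)
  also have "sqrt (real n) powr (real n + \<alpha>) = real n powr ((real n + \<alpha>) / 2)"
    by (simp add: sqrt_def root_powr_inverse powr_powr n)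
  also have "h powr (real n + \<alpha>) = h ^ n * h powr \<alpha>"
    using h by (simp add: powr_add powr_realpow)
  finally show ?thesis using h by simp
qed

lemma hpow_le:
  fixes h \<alpha> M :: real and n :: nat
  assumes h: "h > 0" and n: "n > 0" and a: "\<alpha> \<ge> 0" and hM: "h ^ n \<le> M"
  shows "h powr \<alpha> \<le> M powr (\<alpha> / real n)"
proof -
  have "h powr \<alpha> = (h ^ n) powr (\<alpha> / real n)"
    using h n by (simp add: powr_realpow[symmetric] powr_powr)
  also have "\<dots> \<le> M powr (\<alpha> / real n)"
    using hM h a by (intro powr_mono2) auto
  finally show ?thesis .
qed

lemma ennreal_div_step:
  fixes X I :: ennreal and b r :: real
  assumes "X \<le> ennreal b * I" "0 < r" "0 \<le> b"
  shows "X / ennreal r \<le> ennreal (b / r) * I"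
proof -
  have "X / ennreal r \<le> ennreal b * I / ennreal r" using assms(1) by (rule divide_right_mono_ennreal)
  also have "\<dots> = ennreal (b / r) * I"
    using assms by (simp add: divide_ennreal[symmetric] ennreal_times_divide mult.commute)
  finally show ?thesis .
qed




theorem mainTheorem8:
  fixes f :: "real^'n \<Rightarrow> real" and \<alpha> q :: real
  assumes "0 < \<alpha>" and "\<alpha> < 1"
    and "1 / q = 1 - \<alpha> / real CARD('n)"
    and "f \<in> borel_measurable (lebesgue_on Q0)"
    and "W_seminorm \<alpha> f < \<infinity>"
  shows "GaRo_norm q f \<le> ennreal (real CARD('n) powr ((real CARD('n) + \<alpha>) / 2)) * W_seminorm \<alpha> f"
proof -
  define n where "n = CARD('n)"
  define s where "s = real n + \<alpha>"
  define c where "c = real n powr ((real n + \<alpha>) / 2)"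
  have npos: "n > 0" unfolding n_def by simp
  have s0: "0 \<le> s" using assms(1) unfolding s_def by simp
  have Q0S: "Q0 \<in> sets lebesgue" unfolding Q0_def by simp
  define g where "g x = indicator Q0 x *\<^sub>R f x" for x
  have gm: "g \<in> borel_measurable lebesgue"
    unfolding g_def using assms(4) borel_measurable_restrict_space_iff[of Q0 lebesgue f] Q0S by simp
  have gf: "x \<in> Q0 \<Longrightarrow> g x = f x" for x unfolding g_def by simp
  define K where "K x y = ennreal (\<bar>g x - g y\<bar> / norm (x - y) powr s)" for x y
  define I where "I Q = (\<integral>\<^sup>+x. (\<integral>\<^sup>+y. K x y * indicator Q y \<partial>lebesgue) * indicator Q x \<partial>lebesgue)" for Q
  define W where "W = W_seminorm \<alpha> f"
  have WI: "W = I Q0"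
    unfolding W_def W_seminorm_def I_def K_def s_def n_def
    by (intro nn_integral_cong) (auto split: split_indicator intro!: nn_integral_cong simp: gf)
  have numg: "(\<integral>\<^sup>+x. (\<integral>\<^sup>+y. ennreal \<bar>f x - f y\<bar> * indicator Q y \<partial>lebesgue) * indicator Q x \<partial>lebesgue)
     = (\<integral>\<^sup>+x. (\<integral>\<^sup>+y. ennreal \<bar>g x - g y\<bar> * indicator Q y \<partial>lebesgue) * indicator Q x \<partial>lebesgue)"
    if "Q \<subseteq> Q0" for Q
    using that by (intro nn_integral_cong) (auto split: split_indicator intro!: nn_integral_cong simp: gf subsetD)
  have "GaRo_num f C / ennreal (family_measure C powr (1 - 1 / q)) \<le> ennreal c * W"
    if C: "C \<in> cube_families" for C
  proof -
    have Cc: "countable C" and Csub: "\<And>Q. Q \<in> C \<Longrightarrow> is_subcube Q"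
      and Cd0: "\<And>Q Q'. Q \<in> C \<Longrightarrow> Q' \<in> C \<Longrightarrow> Q \<noteq> Q' \<Longrightarrow> interior Q \<inter> interior Q' = {}"
      using C unfolding cube_families_def by auto
    have Cbox: "\<exists>a h. h > 0 \<and> Q = box a (a + h *\<^sub>R One) \<and> Q \<subseteq> Q0" if "Q \<in> C" for Q
      using Csub[OF that] unfolding is_subcube_def by blast
    have CQ0: "Q \<subseteq> Q0" if "Q \<in> C" for Q using Cbox[OF that] by blast
    have CS: "Q \<in> sets lebesgue" if "Q \<in> C" for Q using Cbox[OF that] by auto
    have Cd: "Q \<inter> Q' = {}" if "Q \<in> C" "Q' \<in> C" "Q \<noteq> Q'" for Q Q'
    proof -
      have "open Q" "open Q'" using Cbox that by auto
      then show ?thesis using Cd0[OF that] by (simp add: interior_open)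
    qed
    define M where "M = family_measure C"
    have UC: "(\<integral>\<^sup>+Q. emeasure lebesgue Q \<partial>count_space C) = emeasure lebesgue (\<Union>C)"
      using emeasure_UN_countable[of C id lebesgue] Cc CS Cd by (auto simp: disjoint_family_on_def)
    have UCle: "emeasure lebesgue (\<Union>C) \<le> 1"
    proof -
      have "emeasure lebesgue (\<Union>C) \<le> emeasure lebesgue (Q0 :: (real^'n) set)"
        by (rule emeasure_mono) (use CQ0 Q0S in auto)
      also have "emeasure lebesgue (Q0 :: (real^'n) set) = 1"
        using box_facts[of 1 "0::real^'n"] unfolding Q0_def by simp
      finally show ?thesis .
    qed
    have Mdef: "M = enn2real (emeasure lebesgue (\<Union>C))" unfolding M_def family_measure_def UC ..
    define Mp where "Mp = M powr (\<alpha> / real n)"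
    have Mp0: "Mp \<ge> 0" unfolding Mp_def by simp
    have cube: "(\<integral>\<^sup>+x. (\<integral>\<^sup>+y. ennreal \<bar>f x - f y\<bar> * indicator Q y \<partial>lebesgue) * indicator Q x \<partial>lebesgue)
                 / emeasure lebesgue Q \<le> ennreal (c * Mp) * I Q \<and> M > 0" if Q: "Q \<in> C" for Q
    proof -
      obtain a h where h: "h > 0" and Qd: "Q = box a (a + h *\<^sub>R One)" using Cbox[OF Q] by blast
      have em: "emeasure lebesgue Q = ennreal (h ^ n)" unfolding Qd n_def by (rule box_facts[OF h])
      have "ennreal (h ^ n) \<le> emeasure lebesgue (\<Union>C)"
        unfolding em[symmetric] using Q CS Cc by (intro emeasure_mono) (auto intro: sets.countable_Union)
      moreover have "emeasure lebesgue (\<Union>C) < top"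
        using UCle ennreal_one_less_top by (rule le_less_trans)
      ultimately have "enn2real (ennreal (h ^ n)) \<le> M" unfolding Mdef by (rule enn2real_mono)
      then have hM: "h ^ n \<le> M" using h by simp
      have hp: "h powr \<alpha> \<le> Mp" unfolding Mp_def using hpow_le[OF h npos _ hM] assms(1) by simp
      have b: "(\<integral>\<^sup>+x. (\<integral>\<^sup>+y. ennreal \<bar>f x - f y\<bar> * indicator Q y \<partial>lebesgue) * indicator Q x \<partial>lebesgue)
          \<le> ennreal ((sqrt (real n) * h) powr s) * I Q"
      proof -
        note b0 = cube_bound[OF gm h s0, of a]
        have e1: "box a (a + h *\<^sub>R One) = Q" using Qd by simp
        show ?thesis unfolding numg[OF CQ0[OF Q]] I_def K_def n_def
          using b0 unfolding e1 .
      qed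
      have "(\<integral>\<^sup>+x. (\<integral>\<^sup>+y. ennreal \<bar>f x - f y\<bar> * indicator Q y \<partial>lebesgue) * indicator Q x \<partial>lebesgue)
                 / emeasure lebesgue Q \<le> ennreal ((sqrt (real n) * h) powr s / h ^ n) * I Q"
        unfolding em by (rule ennreal_div_step[OF b]) (use h in auto)
      also have "(sqrt (real n) * h) powr s / h ^ n = c * h powr \<alpha>"
        unfolding s_def c_def by (rule real_alg[OF h npos])
      also have "ennreal (c * h powr \<alpha>) * I Q \<le> ennreal (c * Mp) * I Q"
        using hp by (intro mult_right_mono ennreal_leI mult_left_mono) (auto simp: c_def)
      finally have fin: "(\<integral>\<^sup>+x. (\<integral>\<^sup>+y. ennreal \<bar>f x - f y\<bar> * indicator Q y \<partial>lebesgue) * indicator Q x \<partial>lebesgue)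
                 / emeasure lebesgue Q \<le> ennreal (c * Mp) * I Q" .
      have "0 < h ^ n" using h by simp
      then have "M > 0" using hM by linarith
      then show ?thesis using fin by blast
    qed
    show ?thesis
    proof (cases "C = {}")
      case True
      then show ?thesis by (simp add: GaRo_num_def nn_integral_count_space_finite)
    next
      case False
      then obtain Q where Q: "Q \<in> C" by blast
      have Mpos: "M > 0" using cube[OF Q] by blast
      have Mpp: "Mp > 0" unfolding Mp_def using Mpos by simp
      have "GaRo_num f C \<le> (\<integral>\<^sup>+Q. ennreal (c * Mp) * I Q \<partial>count_space C)"
        unfolding GaRo_num_def by (intro nn_integral_mono) (use cube in auto)
      also have "\<dots> = ennreal (c * Mp) * (\<integral>\<^sup>+Q. I Q \<partial>count_space C)"
        by (rule nn_integral_cmult) simp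
      also have "(\<integral>\<^sup>+Q. I Q \<partial>count_space C) \<le> W"
        unfolding WI I_def K_def by (rule sum_bound[OF gm Q0S Cc CQ0 CS Cd])
      finally have num: "GaRo_num f C \<le> ennreal (c * Mp) * W" by (simp add: mult_left_mono)
      have ex: "1 - 1 / q = \<alpha> / real n" using assms(3) unfolding n_def by simp
      have "GaRo_num f C / ennreal (family_measure C powr (1 - 1 / q)) = GaRo_num f C / ennreal Mp"
        unfolding ex Mp_def M_def ..
      also have "\<dots> \<le> ennreal (c * Mp) * W / ennreal Mp" by (rule divide_right_mono_ennreal[OF num])
      also have "\<dots> = ennreal c * W"
      proof -
        have "ennreal (c * Mp) * W / ennreal Mp = (ennreal c * W) * ennreal Mp / ennreal Mp"
          using Mp0 by (simp add: ennreal_mult c_def mult_ac)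
        also have "\<dots> = ennreal c * W"
          using Mpp by (intro mult_divide_eq_ennreal) auto
        finally show ?thesis .
      qed
      finally show ?thesis .
    qed
  qed
  then have "GaRo_norm q f \<le> ennreal c * W"
    unfolding GaRo_norm_def by (intro SUP_least) auto
  then show ?thesis unfolding c_def W_def n_def .
qed

end
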